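(* Let $(N,g)$ be a simply connected five-dimensional two-step nilpotent Lie group with a left-invariant Riemannian metric, with Lie algebra $\mathfrak{n}$, Levi-Civita connection $\nabla$, and let $\mathfrak{h}$ denote the center of $\mathfrak{n}$. Then every left-invariant projective vector field $X\in\mathfrak{n}$ is affine, and a left-invariant vector field $X\in\mathfrak{n}$ is affine if and only if $X\in\mathfrak{h}$.
   Context: A Lie algebra $\mathfrak{n}$ is two-step nilpotent if $[\mathfrak{n},\mathfrak{n}]\neq 0$ and $[\mathfrak{n},[\mathfrak{n},\mathfrak{n}]]=0$. Left-invariant vector fields are identified with elements of $\mathfrak{n}=T_eN$, and $g$ with an inner product $\langle\cdot,\cdot\rangle$ on $\mathfrak{n}$. Up to isometry, such $(\mathfrak{n},\langle\cdot,\cdot\rangle)$ admits an orthonormal basis $e_1,\dots,e_5$ with one of the following bracket structures (all brackets not listed being zero): (Case 1, center of dimension 1) $[e_1,e_2]=\lambda e_5$, $[e_3,e_4]=\mu e_5$ with $\lambda\ge\mu>0$; (Case 2, center of dimension 2) $[e_1,e_2]=\lambda e_4$, $[e_1,e_3]=\mu e_5$ with $\lambda\ge\mu>0$; (Case 3, center of dimension 3) $[e_1,e_2]=\lambda e_3$ with $\lambda>0$. A vector field $X$ is projective if there is a 1-form $\alpha$ with $(\mathcal{L}_X\nabla)(U,V)=\alpha(U)V+\alpha(V)U$ for all vector fields $U,V$, where $(\mathcal{L}_X\nabla)(U,V)=[X,\nabla_UV]-\nabla_{[X,U]}V-\nabla_U[X,V]$; $X$ is affine if $\mathcal{L}_X\nabla=0$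 (equivalently, projective with $\alpha=0$). *)

theory Defs
  imports "HOL-Analysis.Analysis"
begin

text \<open>A five-dimensional metric Lie algebra: the underlying space is real^5 with the standard
inner product (every inner product space of dimension 5 is isometric to it), and the bracket
is an arbitrary bilinear, antisymmetric map satisfying the Jacobi identity.\<close>

type_synonym vec5 = "real^5"

definition lie_bracket :: "(vec5 \<Rightarrow> vec5 \<Rightarrow> vec5) \<Rightarrow> bool" where
  "lie_bracket br \<longleftrightarrow> bilinear br \<and> (\<forall>x y. br x y = - br y x) \<and>
     (\<forall>x y z. br x (br y z) + br y (br z x) + br z (br x y) = 0)"

definition two_step_nilpotent :: "(vec5 \<Rightarrow> vec5 \<Rightarrow> vec5) \<Rightarrow> bool" where
  "two_step_nilpotent br \<longleftrightarrow> (\<exists>x y. br x y \<noteq> 0) \<and> (\<forall>x y z. br x (br y z) = 0)"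

definition center :: "(vec5 \<Rightarrow> vec5 \<Rightarrow> vec5) \<Rightarrow> vec5 set" where
  "center br = {Z. \<forall>Y. br Z Y = 0}"

text \<open>Levi-Civita connection on left-invariant vector fields, determined by the Koszul formula
  2 <nabla_U V, W> = <[U,V],W> - <[V,W],U> + <[W,U],V>.\<close>
definition lc_nabla :: "(vec5 \<Rightarrow> vec5 \<Rightarrow> vec5) \<Rightarrow> vec5 \<Rightarrow> vec5 \<Rightarrow> vec5" where
  "lc_nabla br U V = (THE w. \<forall>W. 2 * (w \<bullet> W) = br U V \<bullet> W - br V W \<bullet> U + br W U \<bullet> V)"

definition lie_deriv_nabla :: "(vec5 \<Rightarrow> vec5 \<Rightarrow> vec5) \<Rightarrow> vec5 \<Rightarrow> vec5 \<Rightarrow> vec5 \<Rightarrow> vec5" where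
  "lie_deriv_nabla br X U V =
     br X (lc_nabla br U V) - lc_nabla br (br X U) V - lc_nabla br U (br X V)"

definition projective_field :: "(vec5 \<Rightarrow> vec5 \<Rightarrow> vec5) \<Rightarrow> vec5 \<Rightarrow> bool" where
  "projective_field br X \<longleftrightarrow> (\<exists>\<alpha>::vec5 \<Rightarrow> real. linear \<alpha> \<and>
     (\<forall>U V. lie_deriv_nabla br X U V = \<alpha> U *\<^sub>R V + \<alpha> V *\<^sub>R U))"

definition affine_field :: "(vec5 \<Rightarrow> vec5 \<Rightarrow> vec5) \<Rightarrow> vec5 \<Rightarrow> bool" where
  "affine_field br X \<longleftrightarrow> (\<forall>U V. lie_deriv_nabla br X U V = 0)"

end

theory Submission
  imports Defs
begin

definition adj :: "(vec5 \<Rightarrow> vec5 \<Rightarrow> vec5) \<Rightarrow> vec5 \<Rightarrow> vec5 \<Rightarrow> vec5" where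
  "adj br U V = V v* matrix (br U)"

lemma adj_inner: "linear (br U) \<Longrightarrow> adj br U V \<bullet> W = V \<bullet> br U W"
  by (simp add: adj_def dot_lmul_matrix matrix_works)

lemma vec_zero_if: "(\<And>W. (a::vec5) \<bullet> W = 0) \<Longrightarrow> a = 0"
  by (metis inner_eq_zero_iff)

lemma vec_eq_if: "(\<And>W. (a::vec5) \<bullet> W = b \<bullet> W) \<Longrightarrow> a = b"
  by (metis inner_diff_left right_minus_eq vec_zero_if)

locale nil2 =
  fixes br :: "vec5 \<Rightarrow> vec5 \<Rightarrow> vec5"
  assumes lin1: "\<And>U. linear (br U)"
    and lin2: "\<And>V. linear (\<lambda>U. br U V)"
    and anti: "\<And>x y. br x y = - br y x"
    and nil: "\<And>x y z. br x (br y z) = 0"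
begin

lemma adjI: "adj br U V \<bullet> W = V \<bullet> br U W"
  using adj_inner[OF lin1] .

lemma brself: "br x x = 0"
proof -
  have "br x x + br x x = 0" using anti[of x x] by (metis add.right_inverse)
  hence "(2::real) *\<^sub>R br x x = 0" by (simp add: scaleR_2)
  thus ?thesis by simp
qed

lemma br0l[simp]: "br 0 V = 0" using linear_0[OF lin2] .
lemma br0r[simp]: "br U 0 = 0" using linear_0[OF lin1] .
lemma adjI': "W \<bullet> adj br U V = V \<bullet> br U W"
  using adjI by (simp add: inner_commute)

lemma central: "br (br x y) z = 0"
  using anti nil by (metis neg_equal_0_iff_equal)

lemma adj0l[simp]: "adj br 0 V = 0"
  by (rule vec_zero_if) (simp add: adjI)

lemma adj_central: "adj br (br x y) V = 0"
  by (rule vec_zero_if) (simp add: adjI central)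

lemma adj_zero: "adj br U 0 = 0"
  by (rule vec_zero_if) (simp add: adjI)

lemma orth: "br x y \<bullet> adj br U V = 0"
proof -
  have "adj br U V \<bullet> br x y = V \<bullet> br U (br x y)" by (rule adjI)
  thus ?thesis by (simp add: nil inner_commute)
qed

lemma nabla: "lc_nabla br U V = (1/2) *\<^sub>R (br U V - adj br U V - adj br V U)"
proof -
  let ?w = "(1/2) *\<^sub>R (br U V - adj br U V - adj br V U)"
  have P: "\<forall>W. 2 * (?w \<bullet> W) = br U V \<bullet> W - br V W \<bullet> U + br W U \<bullet> V"
  proof
    fix W
    have a: "br W U = - br U W" by (rule anti)
    show "2 * (?w \<bullet> W) = br U V \<bullet> W - br V W \<bullet> U + br W U \<bullet> V"
      by (simp add: a inner_diff_left inner_diff_right adjI adjI' algebra_simps inner_commute[of "br U W"] inner_commute[of "br V W"])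
  qed
  show ?thesis unfolding lc_nabla_def
  proof (rule the_equality)
    show "\<forall>W. 2 * (?w \<bullet> W) = br U V \<bullet> W - br V W \<bullet> U + br W U \<bullet> V" by (rule P)
  next
    fix w assume "\<forall>W. 2 * (w \<bullet> W) = br U V \<bullet> W - br V W \<bullet> U + br W U \<bullet> V"
    with P have "\<And>W. w \<bullet> W = ?w \<bullet> W" by (metis mult_cancel_left zero_neq_numeral)
    thus "w = ?w" by (rule vec_eq_if)
  qed
qed

lemma decomp: "lie_deriv_nabla br X U V =
   br X ((-(1/2)) *\<^sub>R (adj br U V + adj br V U)) + (1/2) *\<^sub>R (adj br V (br X U) + adj br U (br X V))"
proof -
  have l: "linear (br X)" by (rule lin1)
  have "br X (lc_nabla br U V) = br X ((-(1/2)) *\<^sub>R (adj br U V + adj br V U))"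
    unfolding nabla
    by (simp add: linear_scale[OF l] linear_diff[OF l] linear_add[OF l] linear_neg[OF l] nil algebra_simps)
  moreover have "lc_nabla br (br X U) V = (-(1/2)) *\<^sub>R adj br V (br X U)"
    unfolding nabla by (simp add: central adj_central)
  moreover have "lc_nabla br U (br X V) = (-(1/2)) *\<^sub>R adj br U (br X V)"
    unfolding nabla by (simp add: anti[of U "br X V"] central adj_central)
  ultimately show ?thesis unfolding lie_deriv_nabla_def by (simp add: algebra_simps)
qed

lemma split_zero:
  assumes "br X s + b = c" and "c \<bullet> b = 0"
    and "b = (1/2) *\<^sub>R (adj br P Q + adj br R S)"
  shows "b = 0"
proof -
  have "br X s \<bullet> b = 0" using assms(3) by (simp add: inner_add_right orth)
  hence "b \<bullet> b = 0" using assms(1,2) by (metis add_diff_cancel_left' inner_diff_left diff_zero)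
  thus ?thesis by simp
qed

lemma affine_center: "affine_field br X \<longleftrightarrow> X \<in> center br"
proof
  assume "X \<in> center br"
  hence c: "\<And>Y. br X Y = 0" by (simp add: center_def)
  have l0: "br X 0 = 0" using c by simp
  show "affine_field br X"
    unfolding affine_field_def lie_deriv_nabla_def by (simp add: c nabla adj_zero)
next
  assume a: "affine_field br X"
  show "X \<in> center br" unfolding center_def
  proof (clarify)
    fix Y
    let ?b = "(1/2) *\<^sub>R (adj br X (br X Y) + adj br Y (br X X))"
    have e: "br X ((-(1/2)) *\<^sub>R (adj br Y X + adj br X Y)) + ?b = 0"
      using a decomp[of X Y X] by (simp add: affine_field_def)
    have "?b = 0" by (rule split_zero[OF e _ refl]) simp
    hence "adj br X (br X Y) = 0" by (simp add: brself adj_zero)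
    hence "adj br X (br X Y) \<bullet> Y = 0" by simp
    hence "br X Y \<bullet> br X Y = 0" by (simp add: adjI)
    thus "br X Y = 0" by simp
  qed
qed

lemma proj_affine:
  assumes "projective_field br X" shows "affine_field br X"
proof -
  obtain \<alpha> where lin: "linear \<alpha>" and h: "\<And>U V. lie_deriv_nabla br X U V = \<alpha> U *\<^sub>R V + \<alpha> V *\<^sub>R U"
    using assms unfolding projective_field_def by blast
  have z: "\<alpha> U = 0" for U
  proof -
    let ?b = "(1/2) *\<^sub>R (adj br U (br X U) + adj br U (br X U))"
    let ?s = "(-(1/2)) *\<^sub>R (adj br U U + adj br U U)"
    have "\<alpha> U *\<^sub>R U + \<alpha> U *\<^sub>R U = (2 * \<alpha> U) *\<^sub>R U"
      by (simp add: scaleR_2 flip: scaleR_scaleR)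
    hence e: "br X ?s + ?b = (2 * \<alpha> U) *\<^sub>R U"
      using decomp[of X U U] h[of U U] by simp
    have bu: "adj br U (br X U) \<bullet> U = 0" by (simp add: adjI brself)
    have b0: "?b = 0"
      by (rule split_zero[OF e _ refl]) (simp add: inner_add_right adjI' brself linear_scale[OF lin1])
    hence e2: "br X ?s = (2 * \<alpha> U) *\<^sub>R U" using e by simp
    show ?thesis
    proof (rule ccontr)
      assume n: "\<alpha> U \<noteq> 0"
      have "U = (1 / (2 * \<alpha> U)) *\<^sub>R br X ?s" using e2 n by simp
      have cU: "br U Y = 0" for Y
      proof -
        have "br U Y = (1 / (2 * \<alpha> U)) *\<^sub>R br (br X ?s) Y"
          by (subst \<open>U = _\<close>) (rule linear_scale[OF lin2[of Y]])
        thus ?thesis by (simp add: central)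
      qed
      have "adj br U U = 0" by (rule vec_zero_if) (simp add: adjI cU)
      hence "br X ?s = 0" using linear_0[OF lin1] by simp
      with e2 n have "U = 0" by simp
      with n lin show False by (simp add: linear_0)
    qed
  qed
  show ?thesis unfolding affine_field_def using h z by simp
qed

end

theorem mainTheorem2:
  fixes br :: "vec5 \<Rightarrow> vec5 \<Rightarrow> vec5"
  assumes "lie_bracket br" and "two_step_nilpotent br"
  shows "(\<forall>X. projective_field br X \<longrightarrow> affine_field br X) \<and>
         (\<forall>X. affine_field br X \<longleftrightarrow> X \<in> center br)"
proof -
  have b: "bilinear br" and an: "\<forall>x y. br x y = - br y x" and n: "\<forall>x y z. br x (br y z) = 0"
    using assms unfolding lie_bracket_def two_step_nilpotent_def by blast+
  interpret nil2 br
  proof (rule nil2.intro)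
    show "\<And>U. linear (br U)" "\<And>V. linear (\<lambda>U. br U V)"
      using b unfolding bilinear_def by blast+
    show "\<And>x y. br x y = - br y x" "\<And>x y z. br x (br y z) = 0" using an n by blast+
  qed
  show ?thesis using proj_affine affine_center by blast
qed

end
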